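(* Let $e\geqslant 1$ and $b\geqslant 2$ be integers. Suppose that $e\not\equiv 1\pmod{p-1}$ for every prime divisor $p$ of $b-1$. Then for every positive integer $m$ there exists an integer $l>0$ such that $l+1,l+2,\ldots,l+m$ are all $(e,b)$-happy.
   Context: For integers $e\geqslant 1$, $b\geqslant 2$ and a positive integer $n=\sum_{j=0}^k a_j b^j$ with $0\leqslant a_j<b$, define $T_{e,b}(n)=\sum_{j=0}^k a_j^e$ (the sum of the $e$-th powers of the base-$b$ digits of $n$). $T_{e,b}^r$ denotes the $r$-th iterate of $T_{e,b}$, with $T_{e,b}^0(n)=n$. A positive integer $n$ is called $(e,b)$-happy if $T_{e,b}^r(n)=1$ for some $r\geqslant 0$. *)

theory Defs
  imports "HOL-Number_Theory.Number_Theory"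
begin

fun T :: "nat \<Rightarrow> nat \<Rightarrow> nat \<Rightarrow> nat" where
  "T e b n = (if n = 0 \<or> b < 2 then 0 else (n mod b) ^ e + T e b (n div b))"

definition happy :: "nat \<Rightarrow> nat \<Rightarrow> nat \<Rightarrow> bool" where
  "happy e b n \<longleftrightarrow> n > 0 \<and> (\<exists>r. (T e b ^^ r) n = 1)"

end

theory Submission
  imports Defs
begin

declare T.simps[simp del]

primrec rep :: "nat \<Rightarrow> nat \<Rightarrow> nat" where
  "rep b 0 = 0" | "rep b (Suc k) = rep b k * b + 1"

inductive gp :: "nat \<Rightarrow> nat \<Rightarrow> nat \<Rightarrow> nat \<Rightarrow> bool" for e b where
  gp_refl: "gp e b u u"
| gp_step: "gp e b (T e b (u + M)) (T e b (v + M)) \<Longrightarrow> gp e b u v"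

definition Q :: "nat \<Rightarrow> nat \<Rightarrow> nat set \<Rightarrow> bool" where
  "Q e b C \<longleftrightarrow> (\<exists>M>0. \<forall>c\<in>C. happy e b (M + c))"

context fixes e b :: nat assumes e1: "e \<ge> 1" and b2: "b \<ge> 2"
begin

lemma T_step: assumes "r < b" shows "T e b (w * b + r) = r ^ e + T e b w"
proof (cases "w * b + r = 0")
  case True
  then have "w = 0" "r = 0" using b2 by auto
  then show ?thesis using e1 by simp
next
  case False
  then show ?thesis using assms b2 by (subst T.simps) auto
qed

lemma T_0[simp]: "T e b 0 = 0" by (simp add: T.simps)

lemma T_digit: assumes "r < b" shows "T e b r = r ^ e"
  using T_step[of r 0] assms by simp

lemma T_concat: assumes "y < b ^ K" shows "T e b (z * b ^ K + y) = T e b z + T e b y"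
  using assms
proof (induction K arbitrary: y)
  case 0 then show ?case by simp
next
  case (Suc K)
  have bp: "b > 0" using b2 by simp
  have "z * b ^ Suc K + y = (z * b ^ K + y div b) * b + y mod b"
    by (simp add: algebra_simps)
  then have "T e b (z * b ^ Suc K + y) = (y mod b) ^ e + T e b (z * b ^ K + y div b)"
    using T_step bp by simp
  also have "y div b < b ^ K" using Suc.prems bp
    by (simp add: div_less_iff_less_mult mult.commute)
  then have "T e b (z * b ^ K + y div b) = T e b z + T e b (y div b)" using Suc.IH by simp
  also have "T e b y = (y mod b) ^ e + T e b (y div b)"
    using T_step[of "y mod b" "y div b"] bp by simp
  ultimately show ?case by simp
qed

lemma T_mult_pow: "T e b (z * b ^ K) = T e b z"
  using T_concat[of 0 K z] b2 by simp

lemma T_mult_b: "T e b (z * b) = T e b z"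
  using T_mult_pow[of z 1] by simp

lemma T_1[simp]: "T e b 1 = 1" using T_digit[of 1] b2 by auto

lemma T_pow: "T e b (b ^ K) = 1" by (metis T_1 T_mult_pow mult_1)

lemma T_pow_minus1: "T e b (b ^ j - 1) = j * (b - 1) ^ e"
proof (induction j)
  case 0 then show ?case by simp
next
  case (Suc j)
  have bp: "b \<ge> 1" using b2 by simp
  have "b ^ Suc j - 1 = (b ^ j - 1) * b + (b - 1)"
    using bp by (simp add: algebra_simps diff_mult_distrib)
  then show ?case using T_step[of "b - 1" "b ^ j - 1"] Suc bp by simp
qed

lemma T_pos: "z > 0 \<Longrightarrow> T e b z \<ge> 1"
proof (induction z rule: less_induct)
  case (less z)
  have "z = (z div b) * b + z mod b" by simp
  then have eq: "T e b z = (z mod b) ^ e + T e b (z div b)"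
    using T_step[of "z mod b" "z div b"] b2 by (metis mod_less_divisor order_less_le_trans pos2)
  show ?case
  proof (cases "z mod b = 0")
    case True
    then have "z div b > 0" "z div b < z" using less.prems b2 by (auto simp: div_less_dividend)
    then show ?thesis using less.IH eq by fastforce
  next
    case False
    then have "(z mod b) ^ e \<ge> 1" by (simp add: one_le_power Suc_leI)
    then show ?thesis using eq by simp
  qed
qed

lemma pow_gt: "m < b ^ m"
proof -
  have "m < 2 ^ m" by (rule less_exp)
  also have "2 ^ m \<le> b ^ m" using b2 by (simp add: power_mono)
  finally show ?thesis .
qed


lemma T_rep: "T e b (rep b k) = k"
proof (induction k)
  case 0 then show ?case by simp
next
  case (Suc k) then show ?case using T_step[of 1 "rep b k"] b2 by simp
qed

lemma rep_pos: "k > 0 \<Longrightarrow> rep b k > 0"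
  by (cases k) auto

lemma happy_1: "happy e b 1"
  unfolding happy_def by (auto intro: exI[of _ 0])

lemma happy_back: assumes "n > 0" "happy e b (T e b n)" shows "happy e b n"
proof -
  obtain r where "(T e b ^^ r) (T e b n) = 1" using assms(2) unfolding happy_def by blast
  then have "(T e b ^^ Suc r) n = 1" by (simp add: funpow_Suc_right del: funpow.simps)
  then show ?thesis using assms(1) unfolding happy_def by blast
qed

lemma gp_sym: "gp e b u v \<Longrightarrow> gp e b v u"
  by (induction rule: gp.induct) (auto intro: gp.intros)

lemma gp_shift: assumes "x \<ge> u" "gp e b (T e b x) (T e b (x + d))" shows "gp e b u (u + d)"
proof -
  have "T e b (u + (x - u)) = T e b x" "T e b (u + d + (x - u)) = T e b (x + d)"
    using assms(1) by (simp_all add: algebra_simps)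
  then show ?thesis using gp_step[of e b u "x - u" "u + d"] assms(2) by simp
qed

lemma Q_small: assumes "finite C" "card C < 2" shows "Q e b C"
proof -
  consider "C = {}" | c where "C = {c}" using assms
    by (metis One_nat_def card_1_singletonE card_0_eq less_2_cases)
  then show ?thesis
  proof cases
    case 1 then show ?thesis unfolding Q_def by (auto intro: exI[of _ 1])
  next
    case 2
    have lt: "c < b ^ c" by (rule pow_gt)
    have "happy e b (b ^ c - c + c)" using lt T_pow[of c] happy_back[of "b ^ c"] happy_1 b2 by simp
    then show ?thesis unfolding Q_def using 2 lt by (auto intro!: exI[of _ "b ^ c - c"])
  qed
qed

lemma Q_lift: assumes "finite C" "Q e b ((\<lambda>c. T e b (c + M)) ` C)" shows "Q e b C"
proof -
  obtain M1 where M1: "M1 > 0" "\<forall>c\<in>C. happy e b (M1 + T e b (c + M))"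
    using assms(2) unfolding Q_def by auto
  define K where "K = Max (insert 0 ((\<lambda>c. c + M) ` C))"
  have Kb: "c + M < b ^ K" if "c \<in> C" for c
  proof -
    have "c + M \<le> K" unfolding K_def using assms(1) that by (intro Max_ge) auto
    then show ?thesis using pow_gt[of K] by linarith
  qed
  define N where "N = rep b M1 * b ^ K + M"
  have Np: "N > 0" unfolding N_def using rep_pos[OF M1(1)] b2 by simp
  have "happy e b (N + c)" if "c \<in> C" for c
  proof -
    have "N + c = rep b M1 * b ^ K + (c + M)" unfolding N_def by simp
    then have "T e b (N + c) = M1 + T e b (c + M)" using T_concat[OF Kb[OF that]] T_rep by metis
    then show ?thesis using happy_back[of "N + c"] M1(2) that Np by simp
  qed
  then show ?thesis unfolding Q_def using Np by blast
qed

lemma gp_Q: assumes "gp e b u v"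
  shows "\<And>C. finite C \<Longrightarrow> u \<in> C \<Longrightarrow> v \<in> C \<Longrightarrow> u \<noteq> v \<Longrightarrow>
     (\<forall>C'. finite C' \<longrightarrow> card C' < card C \<longrightarrow> Q e b C') \<Longrightarrow> Q e b C"
  using assms
proof (induction rule: gp.induct)
  case (gp_refl u) then show ?case by simp
next
  case (gp_step u M v C)
  define C' where "C' = (\<lambda>c. T e b (c + M)) ` C"
  have fin: "finite C'" unfolding C'_def using gp_step.prems by simp
  have le: "card C' \<le> card C" unfolding C'_def by (rule card_image_le) (use gp_step.prems in simp)
  have "Q e b C'"
  proof (cases "T e b (u + M) = T e b (v + M)")
    case True
    then have "\<not> inj_on (\<lambda>c. T e b (c + M)) C" using gp_step.prems unfolding inj_on_def by blast
    then have "card C' < card C" using le gp_step.prems(1) unfolding C'_def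
      by (metis inj_on_iff_eq_card le_neq_implies_less)
    then show ?thesis using gp_step.prems fin by blast
  next
    case False
    show ?thesis
      by (rule gp_step.IH) (use fin False gp_step.prems le in \<open>auto simp: C'_def\<close>)
  qed
  then show ?case using Q_lift gp_step.prems unfolding C'_def by blast
qed

end

lemma prime_witness:
  fixes e b p :: nat
  assumes e1: "e \<ge> 1" and b2: "b \<ge> 2" and p: "prime p" "p dvd (b - 1)"
    and hyp: "\<not> [e = 1] (mod (p - 1))"
  shows "\<exists>\<delta>\<in>{1..b-1}. \<not> p dvd (\<delta> ^ e - \<delta>)"
proof (rule ccontr)
  assume H: "\<not> ?thesis"
  have p1: "p > 1" using p(1) prime_gt_1_nat by blast
  obtain g where g: "residue_primroot p g" using prime_primitive_root_exists p1 p(1) by blast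
  have cop: "coprime p g" and ordg: "ord p g = p - 1"
    using g p(1) by (auto simp: residue_primroot_def totient_prime)
  define \<delta> where "\<delta> = g mod p"
  have "\<delta> \<noteq> 0"
  proof
    assume "\<delta> = 0"
    then have "p dvd g" unfolding \<delta>_def by (simp add: mod_eq_0_iff_dvd)
    then have "p = 1" using cop coprime_common_divisor_nat dvd_refl by blast
    then show False using p1 by simp
  qed
  moreover have "\<delta> < p" unfolding \<delta>_def using p1 by simp
  moreover have "p \<le> b - 1" using p b2 by (simp add: dvd_imp_le)
  ultimately have "\<delta> \<in> {1..b-1}" by auto
  with H have "p dvd (\<delta> ^ e - \<delta>)" by blast
  moreover have "\<delta> \<le> \<delta> ^ e" using \<open>\<delta> \<noteq> 0\<close> e1
    by (simp add: self_le_power)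
  ultimately have "[\<delta> ^ e = \<delta>] (mod p)" using cong_altdef_nat by blast
  moreover have "[\<delta> = g] (mod p)" unfolding \<delta>_def by (simp add: cong_def)
  ultimately have "[g ^ e = g] (mod p)"
    by (meson cong_pow cong_sym cong_trans)
  moreover have "g ^ e = g * g ^ (e - 1)" using e1 by (cases e) auto
  ultimately have "[g * g ^ (e - 1) = g * 1] (mod p)" by simp
  then have "[g ^ (e - 1) = 1] (mod p)" using cop cong_mult_lcancel_nat
    by (metis coprime_commute)
  then have "(p - 1) dvd (e - 1)" using ordg ord_divides by metis
  then have "[e = 1] (mod (p - 1))" using e1 cong_altdef_nat by blast
  with hyp show False by blast
qed

context fixes e b :: nat assumes e1: "e \<ge> 1" and b2: "b \<ge> 2"
begin

definition Iset :: "int set" where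
  "Iset = {i. \<exists>z. [int (T e b z) - int z = i] (mod int (b - 1))}"

lemma b_cong1: "[b ^ K = 1] (mod (b - 1))"
proof -
  have "[b = 1] (mod (b - 1))" using b2 cong_altdef_nat by auto
  then show ?thesis using cong_pow by fastforce
qed

lemma I_add: assumes "i \<in> Iset" "j \<in> Iset" shows "i + j \<in> Iset"
proof -
  obtain z1 where z1: "[int (T e b z1) - int z1 = i] (mod int (b - 1))"
    using assms(1) unfolding Iset_def by blast
  obtain z2 where z2: "[int (T e b z2) - int z2 = j] (mod int (b - 1))"
    using assms(2) unfolding Iset_def by blast
  define z where "z = z2 * b ^ z1 + z1"
  have Tz: "T e b z = T e b z2 + T e b z1" unfolding z_def
    by (rule T_concat[OF e1 b2 pow_gt[OF e1 b2]])
  have zc0: "[z = z2 * 1 + z1] (mod (b - 1))" unfolding z_def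
    by (intro cong_add cong_mult cong_refl b_cong1)
  have zc: "[int z = int z2 + int z1] (mod int (b - 1))"
    using cong_int_iff[THEN iffD2, OF zc0] by simp
  have "[int (T e b z) - int z = (int (T e b z2) - int z2) + (int (T e b z1) - int z1)] (mod int (b - 1))"
  proof -
    have "[int (T e b z) - int z = int (T e b z) - (int z2 + int z1)] (mod int (b - 1))"
      by (intro cong_diff cong_refl zc)
    then show ?thesis using Tz by (simp add: algebra_simps)
  qed
  moreover have "[(int (T e b z2) - int z2) + (int (T e b z1) - int z1) = j + i] (mod int (b - 1))"
    by (intro cong_add z1 z2)
  ultimately have "[int (T e b z) - int z = i + j] (mod int (b - 1))"
    using cong_trans by (simp add: add.commute)
  then show ?thesis unfolding Iset_def by blast
qed

lemma I_0: "0 \<in> Iset" unfolding Iset_def by (auto intro!: exI[of _ 0] simp: T_0[OF e1 b2])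

lemma I_cong: assumes "i \<in> Iset" "[i = j] (mod int (b - 1))" shows "j \<in> Iset"
  using assms unfolding Iset_def by (auto intro: cong_trans)

lemma I_digit: assumes "d \<in> {1..b-1}" shows "int (d ^ e) - int d \<in> Iset"
proof -
  have "T e b d = d ^ e" using assms b2 by (intro T_digit[OF e1 b2]) auto
  then show ?thesis unfolding Iset_def by (auto intro!: exI[of _ d])
qed

lemma I_natmul: assumes "i \<in> Iset" shows "int k * i \<in> Iset"
proof (induction k)
  case 0 then show ?case using I_0 by simp
next
  case (Suc k)
  then have "int k * i + i \<in> Iset" using I_add assms by blast
  then show ?case by (simp add: algebra_simps)
qed

lemma I_intmul: assumes "i \<in> Iset" shows "k * i \<in> Iset"
proof -
  have n0: "int (b - 1) > 0" using b2 by simp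
  have "int (nat (k mod int (b - 1))) * i \<in> Iset" by (rule I_natmul[OF assms])
  moreover have "int (nat (k mod int (b - 1))) = k mod int (b - 1)" using n0 by simp
  moreover have "[k mod int (b - 1) * i = k * i] (mod int (b - 1))"
    by (intro cong_mult cong_refl) (simp add: cong_def)
  ultimately show ?thesis using I_cong by metis
qed

lemma I_all:
  assumes hyp: "\<forall>p. prime p \<and> p dvd (b - 1) \<longrightarrow> \<not> [e = 1] (mod (p - 1))"
  shows "t \<in> Iset"
proof -
  define n where "n = int (b - 1)"
  have n0: "n > 0" unfolding n_def using b2 by simp
  have nI: "n \<in> Iset" using I_0 unfolding n_def by (rule I_cong) (simp add: cong_def)
  define gn where "gn = (LEAST g::nat. g > 0 \<and> int g \<in> Iset)"
  have ex: "nat n > 0 \<and> int (nat n) \<in> Iset" using n0 nI by simp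
  have gnI: "gn > 0 \<and> int gn \<in> Iset"
    unfolding gn_def by (rule LeastI[of _ "nat n"]) (rule ex)
  have gnmin: "\<And>h::nat. h > 0 \<Longrightarrow> int h \<in> Iset \<Longrightarrow> gn \<le> h"
    unfolding gn_def by (rule Least_le) blast
  define g where "g = int gn"
  have gI: "g > 0 \<and> g \<in> Iset" using gnI unfolding g_def by simp
  have gmin: "\<And>h. h > 0 \<Longrightarrow> h \<in> Iset \<Longrightarrow> g \<le> h"
  proof -
    fix h :: int assume "h > 0" "h \<in> Iset"
    then have "gn \<le> nat h" using gnmin[of "nat h"] by simp
    then show "g \<le> h" unfolding g_def using \<open>h > 0\<close> by linarith
  qed
  have gdvd: "g dvd i" if "i \<in> Iset" for i
  proof -
    have "i + (- (i div g)) * g \<in> Iset" using I_add[OF that I_intmul[of g]] gI by blast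
    moreover have "i + (- (i div g)) * g = i mod g" using div_mult_mod_eq[of i g] by linarith
    ultimately have "i mod g \<in> Iset" by simp
    moreover have "i mod g \<ge> 0" "i mod g < g" using gI by auto
    ultimately have "i mod g = 0" using gmin[of "i mod g"] by linarith
    then show ?thesis by auto
  qed
  have "g = 1"
  proof (rule ccontr)
    assume "g \<noteq> 1"
    then have "nat g \<noteq> 1" using gI by linarith
    then obtain p where p: "prime p" "p dvd nat g" using prime_factor_nat by blast
    have "int p dvd g" using p unfolding g_def by simp
    then have "int p dvd n" using gdvd[OF nI] dvd_trans by blast
    then have pn: "p dvd (b - 1)" unfolding n_def by simp
    obtain d where d: "d \<in> {1..b-1}" "\<not> p dvd (d ^ e - d)"
      using prime_witness[OF e1 b2 p(1) pn] hyp p(1) pn by blast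
    have le: "d \<le> d ^ e" using d(1) e1 by (simp add: self_le_power)
    have "int p dvd int (d ^ e) - int d" using gdvd[OF I_digit[OF d(1)]] \<open>int p dvd g\<close> dvd_trans by blast
    then have "int p dvd int (d ^ e - d)" using le by (simp add: of_nat_diff)
    then show False using d(2) by simp
  qed
  then have "t * 1 \<in> Iset" using I_intmul gI by blast
  then show ?thesis by simp
qed

end

context fixes e b :: nat assumes e1: "e \<ge> 1" and b2: "b \<ge> 2"
  and hyp: "\<forall>p. prime p \<and> p dvd (b - 1) \<longrightarrow> \<not> [e = 1] (mod (p - 1))"
begin

lemma construct: "\<exists>z'. (b - 1) ^ e dvd z' \<and> (b - 1) dvd (T e b c0 + T e b z')"
proof -
  define n where "n = b - 1"
  have n0: "n > 0" unfolding n_def using b2 by simp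
  obtain z where z: "[int (T e b z) - int z = - int (T e b c0)] (mod int n)"
    using I_all[OF e1 b2 hyp, of "- int (T e b c0)"] unfolding Iset_def[OF e1 b2] n_def by blast
  define L where "L = totient (n ^ e)"
  have L0: "L \<ge> 1" unfolding L_def using n0 by (simp add: Suc_le_eq)
  have cop: "coprime b (n ^ e)"
  proof -
    have "coprime (Suc n) n" by (rule coprime_Suc_left_nat)
    moreover have "Suc n = b" unfolding n_def using b2 by simp
    ultimately show ?thesis by simp
  qed
  have bL: "[b ^ L = 1] (mod n ^ e)" unfolding L_def by (rule euler_theorem[OF cop])
  have pad: "\<exists>z'. [z' = z + m] (mod n ^ e) \<and> T e b z' = T e b z + m" for m
  proof (induction m)
    case 0 then show ?case by (auto intro: exI[of _ z])
  next
    case (Suc m)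
    then obtain z' where z': "[z' = z + m] (mod n ^ e)" "T e b z' = T e b z + m" by blast
    define z'' where "z'' = 1 * b ^ (L * Suc z') + z'"
    have lt1: "z' < b ^ z'" by (rule pow_gt[OF e1 b2])
    have "z' \<le> L * Suc z'" using mult_le_mono1[OF L0, of "Suc z'"] by simp
    then have "b ^ z' \<le> b ^ (L * Suc z')" using b2 by (intro power_increasing) auto
    with lt1 have lt: "z' < b ^ (L * Suc z')" by linarith
    have T'': "T e b z'' = T e b z' + 1" unfolding z''_def
      using T_concat[OF e1 b2 lt, of 1] T_1[OF e1 b2] by simp
    have "[b ^ (L * Suc z') = 1] (mod n ^ e)"
      using cong_pow[OF bL, of "Suc z'"] by (simp only: power_mult power_one)
    then have "[z'' = 1 + (z + m)] (mod n ^ e)" unfolding z''_def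
      by (intro cong_add z') simp
    then show ?case using T'' z' by (auto intro!: exI[of _ z''])
  qed
  define m where "m = n ^ e - z mod n ^ e"
  obtain z' where z': "[z' = z + m] (mod n ^ e)" "T e b z' = T e b z + m" using pad by blast
  have ne0: "n ^ e > 0" using n0 by simp
  have r: "z mod n ^ e < n ^ e" using mod_less_divisor[OF ne0, of z] .
  have "z + m = (z div n ^ e * n ^ e + z mod n ^ e) + (n ^ e - z mod n ^ e)"
    unfolding m_def div_mult_mod_eq ..
  also have "\<dots> = (z div n ^ e) * n ^ e + n ^ e" using r by simp
  finally have "z + m = (z div n ^ e) * n ^ e + n ^ e" .
  then have "(z + m) mod n ^ e = 0" by simp
  then have d1: "n ^ e dvd z'" using z'(1) by (simp add: cong_def dvd_eq_mod_eq_0)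
  have nne: "n dvd n ^ e" using e1 by (simp add: dvd_power)
  have d2: "int n dvd int z'" using dvd_trans[OF nne d1] by simp
  have "[z' = z + m] (mod n)" by (rule cong_dvd_modulus_nat[OF z'(1) nne])
  then have d3: "int n dvd (int z + int m - int z')"
    using cong_int_iff[of z' "z + m" n] by (simp add: cong_iff_dvd_diff dvd_diff_commute)
  have d4: "int n dvd (int (T e b z) - int z + int (T e b c0))"
    using z by (simp add: cong_iff_dvd_diff)
  have eq: "(int (T e b z) - int z + int (T e b c0)) + (int z + int m - int z') + int z'
      = int (T e b c0 + T e b z')" using z'(2) by simp
  have "int n dvd int (T e b c0 + T e b z')"
    unfolding eq[symmetric] by (intro dvd_add d2 d3 d4)
  then have "n dvd T e b c0 + T e b z'" by (simp only: of_nat_dvd_iff)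
  then show ?thesis using d1 unfolding n_def by blast
qed

end

context fixes e b :: nat assumes e1: "e \<ge> 1" and b2: "b \<ge> 2"
  and hyp: "\<forall>p. prime p \<and> p dvd (b - 1) \<longrightarrow> \<not> [e = 1] (mod (p - 1))"
begin

lemma gp_all: assumes d1: "d \<ge> 1" shows "gp e b u (u + d)"
proof -
  define n where "n = b - 1"
  have bn: "b = n + 1" unfolding n_def using b2 by simp
  define c0 where "c0 = T e b (b ^ d - d) - 1"
  have bd: "d < b ^ d" by (rule pow_gt[OF e1 b2])
  have Tpos: "T e b (b ^ d - d) \<ge> 1" using bd by (intro T_pos[OF e1 b2]) simp
  obtain z' where z': "n ^ e dvd z'" "n dvd (T e b c0 + T e b z')"
    using construct[OF e1 b2 hyp, of c0] unfolding n_def by blast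
  define N where "N = z' * b ^ c0 + c0"
  have TN: "T e b N = T e b z' + T e b c0" unfolding N_def
    by (rule T_concat[OF e1 b2 pow_gt[OF e1 b2]])
  from z'(2) obtain q where q: "T e b c0 + T e b z' = n * q" by (erule dvdE)
  have qN: "T e b N = q * n"
  proof -
    have "T e b N = T e b c0 + T e b z'" using TN by (simp only: add.commute)
    also have "\<dots> = n * q" by (rule q)
    also have "\<dots> = q * n" by (rule mult.commute)
    finally show ?thesis .
  qed
  from z'(1) obtain k0 where k0: "z' = n ^ e * k0" by (erule dvdE)
  have j: "z' * b ^ c0 = (k0 * b ^ c0) * n ^ e" unfolding k0 by (simp only: mult.commute mult.left_commute)
  define j where "j = k0 * b ^ c0"
  define K where "K = d + j"
  have TbK: "T e b (b ^ K - d) = N + 1"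
  proof -
    have "b ^ K - d = (b ^ j - 1) * b ^ d + (b ^ d - d)"
    proof -
      have "b ^ j \<ge> 1" using b2 by simp
      then have "(b ^ j - 1) * b ^ d + (b ^ d - d) = b ^ j * b ^ d - d"
        using bd by (simp add: diff_mult_distrib)
      then show ?thesis unfolding K_def by (simp add: power_add mult.commute)
    qed
    moreover have "b ^ d - d < b ^ d" using bd d1 by simp
    ultimately have "T e b (b ^ K - d) = T e b (b ^ j - 1) + T e b (b ^ d - d)"
      using T_concat[OF e1 b2] by simp
    also have "\<dots> = j * n ^ e + c0 + 1" using T_pow_minus1[OF e1 b2, of j] Tpos
      unfolding c0_def n_def by simp
    moreover have "N = j * n ^ e + c0" unfolding N_def j_def using j by simp
    ultimately show ?thesis by simp
  qed
  have bKd: "d \<le> b ^ K"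
  proof -
    have "b ^ d \<le> b ^ K" unfolding K_def using b2 by (intro power_increasing) auto
    then show ?thesis using bd by simp
  qed
  define w where "w = T e b u + 1"
  have s3: "gp e b v (v + q * n)" for v
  proof -
    define x3 where "x3 = v * b ^ (q * b) + q"
    have qlt: "q * b < b ^ (q * b)" by (rule pow_gt[OF e1 b2])
    have "q \<le> q * b" using b2 by simp
    then have ql: "q < b ^ (q * b)" using qlt by linarith
    have "x3 + q * n = v * b ^ (q * b) + q * b" unfolding x3_def bn by (simp add: algebra_simps)
    then have "T e b (x3 + q * n) = T e b v + T e b q"
      using T_concat[OF e1 b2 qlt] T_mult_b[OF e1 b2] by simp
    moreover have "T e b x3 = T e b v + T e b q" unfolding x3_def by (rule T_concat[OF e1 b2 ql])
    ultimately have g3: "gp e b (T e b x3) (T e b (x3 + q * n))" by (simp add: gp_refl)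
    have ge3: "x3 \<ge> v"
    proof -
      have "1 \<le> b ^ (q * b)" using b2 by simp
      then have "v * 1 \<le> v * b ^ (q * b)" by (rule mult_le_mono2)
      then show ?thesis unfolding x3_def by linarith
    qed
    show ?thesis using gp_shift[OF e1 b2 ge3 g3] .
  qed
  have s2: "gp e b w (w + N)"
  proof -
    define x2 where "x2 = w * b ^ N"
    have "T e b x2 = T e b w" unfolding x2_def by (rule T_mult_pow[OF e1 b2])
    moreover have "T e b (x2 + N) = T e b w + T e b N" unfolding x2_def
      by (rule T_concat[OF e1 b2 pow_gt[OF e1 b2]])
    ultimately have g2: "gp e b (T e b x2) (T e b (x2 + N))" using s3[of "T e b w"] qN by simp
    have "1 \<le> b ^ N" using b2 by simp
    then have "w * 1 \<le> w * b ^ N" by (rule mult_le_mono2)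
    then have ge2: "x2 \<ge> w" unfolding x2_def by simp
    show ?thesis using gp_shift[OF e1 b2 ge2 g2] .
  qed
  define x1 where "x1 = u * b ^ Suc K + (b ^ K - d)"
  have lt2: "b ^ K < b ^ Suc K" using b2 by simp
  have lt1: "b ^ K - d < b ^ Suc K" using lt2 diff_le_self le_less_trans by blast
  have "x1 + d = u * b ^ Suc K + b ^ K" unfolding x1_def using bKd by simp
  then have "T e b (x1 + d) = w" unfolding w_def
    using T_concat[OF e1 b2 lt2] T_pow[OF e1 b2] by simp
  moreover have "T e b x1 = w + N" unfolding x1_def w_def
    using T_concat[OF e1 b2 lt1] TbK by simp
  ultimately have g1: "gp e b (T e b x1) (T e b (x1 + d))" using gp_sym[OF e1 b2 s2] by simp
  have "1 \<le> b ^ Suc K" using b2 by simp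
  then have "u * 1 \<le> u * b ^ Suc K" by (rule mult_le_mono2)
  then have ge1: "x1 \<ge> u" unfolding x1_def by linarith
  show ?thesis using gp_shift[OF e1 b2 ge1 g1] .
qed

lemma Q_all: "finite C \<Longrightarrow> Q e b C"
proof (induction "card C" arbitrary: C rule: less_induct)
  case less
  show ?case
  proof (cases "card C < 2")
    case True then show ?thesis using Q_small[OF e1 b2 less.prems] by simp
  next
    case False
    then obtain u v where uv: "u \<in> C" "v \<in> C" "u < v"
    proof -
      have "\<not> card C \<le> Suc 0" using False by simp
      then obtain u v where "u \<in> C" "v \<in> C" "u \<noteq> v"
        using card_le_Suc0_iff_eq[OF less.prems] by blast
      then show ?thesis using that by (cases "u < v") (auto simp: not_less)
    qed
    have "gp e b u (u + (v - u))" using gp_all[of "v - u" u] uv(3) by simp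
    then have "gp e b u v" using uv(3) by simp
    have IH: "\<forall>C'. finite C' \<longrightarrow> card C' < card C \<longrightarrow> Q e b C'" using less.hyps by blast
    show ?thesis
      by (rule gp_Q[OF e1 b2 \<open>gp e b u v\<close> less.prems uv(1,2) _ IH]) (use uv(3) in simp)
  qed
qed

end

theorem theorem1p1:
  fixes e b :: nat
  assumes "e \<ge> 1" and "b \<ge> 2"
    and "\<forall>p. prime p \<and> p dvd (b - 1) \<longrightarrow> \<not> [e = 1] (mod (p - 1))"
  shows "\<forall>m::nat. m > 0 \<longrightarrow> (\<exists>l::nat. l > 0 \<and> (\<forall>i\<in>{1..m}. happy e b (l + i)))"
proof (intro allI impI)
  fix m :: nat assume "m > 0"
  have "Q e b (T e b ` {1..m})" by (rule Q_all[OF assms]) simp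
  then obtain M1 where M1: "M1 > 0" "\<forall>i\<in>{1..m}. happy e b (M1 + T e b i)"
    unfolding Q_def by auto
  define l where "l = rep b M1 * b ^ m"
  have lp: "l > 0" unfolding l_def using rep_pos[OF assms(1,2) M1(1)] assms(2) by simp
  have "happy e b (l + i)" if "i \<in> {1..m}" for i
  proof -
    have "i < b ^ m" using that pow_gt[OF assms(1,2), of m] by auto
    then have "T e b (rep b M1 * b ^ m + i) = T e b (rep b M1) + T e b i"
      by (rule T_concat[OF assms(1,2)])
    then have "T e b (l + i) = M1 + T e b i" unfolding l_def using T_rep[OF assms(1,2)] by simp
    then show ?thesis using happy_back[OF assms(1,2), of "l + i"] M1(2) that lp by simp
  qed
  then show "\<exists>l>0. \<forall>i\<in>{1..m}. happy e b (l + i)" using lp by blast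
qed


end
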